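(* Assume the hypotheses of Corollary 6.10 as recalled in the context (in particular $L_\lambda$ self-adjoint), take $\sigma=0$, and assume $\beta_1(\lambda)=\dots=\beta_m(\lambda)=:\beta_*(\lambda)$ for all $\lambda\in\Lambda_{2k}$. Then for $\lambda$ sufficiently close to $\lambda_c$, $$\widehat h^{\rm app}_\lambda(\xi):=\int_{-\infty}^0 e^{-sL^{\mathfrak s}_\lambda}P_{\mathfrak s}F_k(e^{sL^{\mathfrak c}_\lambda}\xi)\,ds=(-L^{\mathfrak s}_\lambda)^{-1}P_{\mathfrak s}F_k(\xi)+O\big(|\beta_*(\lambda)|\,\|\xi\|_\alpha^k\big),\qquad\xi\in\mathcal H^{\mathfrak c}.$$
   Context: $\mathcal H$ infinite-dimensional separable real Hilbert space with inner product $\langle\cdot,\cdot\rangle$; $A$ sectorial with compact resolvent, $\mathrm{Re}\,\sigma(-A)<0$; $\mathcal H_\gamma=D(A^\gamma)$, $\|u\|_\gamma=\|A^\gamma u\|$; $L_\lambda=-A+B_\lambda$ ($B_\lambda:\mathcal H_{\gamma_0}\to\mathcal H$ bounded, continuous in $\lambda$), here self-adjoint, with real eigenvalues $\beta_1(\lambda)\ge\beta_2(\lambda)\ge\dots$ (with multiplicity) and normalized eigenvectors forming a Hilbert basis; $\alpha\in[0,1)$; $F$ is $C^p$ with $F(u)=F_k(u,\dots,u)+O(\|u\|_\alpha^{k+1})$, $p>k\ge2$, $F_k$ continuous $k$-linear, $F_k(u)=F_k(u,\dots,u)$. Principle of exchange of stabilities at $\lambda_c$ with $m$ critical eigenvalues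 ($\beta_j(\lambda)<0,=0,>0$ for $\lambda<,=,>\lambda_c$, $j\le m$; $\beta_j(\lambda_c)<0$ for $j>m$); $\Lambda_{2k}\ni\lambda_c$ open with $0>2k\inf_{\Lambda_{2k}}\inf_{j\le m}\beta_j>\sup_{\Lambda_{2k}}\sup_{j>m}\beta_j$. $\mathcal H^{\mathfrak c}=\mathrm{span}\{e_1,\dots,e_m\}$, $P_{\mathfrak c},P_{\mathfrak s}$ the orthogonal spectral projectors, $L^{\mathfrak c}_\lambda=L_\lambda P_{\mathfrak c}$, $L^{\mathfrak s}_\lambda=L_\lambda P_{\mathfrak s}$. The $O(\cdot)$ is the usual Landau notation (a bound by a constant times $|\beta_*(\lambda)|\|\xi\|_\alpha^k$). *)

theory Defs
  imports "HOL-Analysis.Analysis"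
begin

text \<open>Spectral setting: for each parameter value lam, the self-adjoint operator L_lam has
  the Hilbert basis of eigenvectors e lam 0, e lam 1, ... (0-indexed) with eigenvalues
  beta lam 0 \<ge> beta lam 1 \<ge> ...  The first m modes (indices j < m) are critical.\<close>

definition hilbert_basis :: "(nat \<Rightarrow> 'a::{real_inner,complete_space}) \<Rightarrow> bool" where
  "hilbert_basis b \<longleftrightarrow> (\<forall>i j. inner (b i) (b j) = (if i = j then 1 else 0)) \<and>
     (\<forall>u. (\<lambda>n. \<Sum>j<n. inner u (b j) *\<^sub>R b j) \<longlonglongrightarrow> u)"

definition dom_L :: "(nat \<Rightarrow> 'a::{real_inner,complete_space}) \<Rightarrow> (nat \<Rightarrow> real) \<Rightarrow> 'a set" where
  "dom_L b \<beta> = {u. summable (\<lambda>j. (\<beta> j * inner u (b j))\<^sup>2)}"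

definition op_L :: "(nat \<Rightarrow> 'a::{real_inner,complete_space}) \<Rightarrow> (nat \<Rightarrow> real) \<Rightarrow> 'a \<Rightarrow> 'a" where
  "op_L b \<beta> u = (\<Sum>j. (\<beta> j * inner u (b j)) *\<^sub>R b j)"

definition center_space :: "(nat \<Rightarrow> 'a::{real_inner,complete_space}) \<Rightarrow> nat \<Rightarrow> 'a set" where
  "center_space b m = span (b ` {..<m})"

definition proj_s :: "(nat \<Rightarrow> 'a::{real_inner,complete_space}) \<Rightarrow> nat \<Rightarrow> 'a \<Rightarrow> 'a" where
  "proj_s b m u = (\<Sum>j. (if m \<le> j then inner u (b j) else 0) *\<^sub>R b j)"

definition exp_Ls :: "(nat \<Rightarrow> 'a::{real_inner,complete_space}) \<Rightarrow> (nat \<Rightarrow> real) \<Rightarrow> nat \<Rightarrow> real \<Rightarrow> 'a \<Rightarrow> 'a" where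
  "exp_Ls b \<beta> m t u = (\<Sum>j. (if m \<le> j then exp (t * \<beta> j) * inner u (b j) else 0) *\<^sub>R b j)"

definition exp_Lc :: "(nat \<Rightarrow> 'a::{real_inner,complete_space}) \<Rightarrow> (nat \<Rightarrow> real) \<Rightarrow> nat \<Rightarrow> real \<Rightarrow> 'a \<Rightarrow> 'a" where
  "exp_Lc b \<beta> m t u = (\<Sum>j<m. (exp (t * \<beta> j) * inner u (b j)) *\<^sub>R b j)"

text \<open>(-L^s)^{-1} on the range of P_s (extended by P_s to all of H).\<close>
definition inv_neg_Ls :: "(nat \<Rightarrow> 'a::{real_inner,complete_space}) \<Rightarrow> (nat \<Rightarrow> real) \<Rightarrow> nat \<Rightarrow> 'a \<Rightarrow> 'a" where
  "inv_neg_Ls b \<beta> m u = (\<Sum>j. (if m \<le> j then - inner u (b j) / \<beta> j else 0) *\<^sub>R b j)"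

text \<open>A function of k arguments (arguments indexed by i < k) which is k-linear on the
  subspace H_alpha and bounded w.r.t. the alpha-norm nrm u = norm (A^alpha u).\<close>
definition bounded_klinear_on ::
  "nat \<Rightarrow> 'a::real_normed_vector set \<Rightarrow> ('a \<Rightarrow> real) \<Rightarrow> ((nat \<Rightarrow> 'a) \<Rightarrow> 'b::real_normed_vector) \<Rightarrow> bool" where
  "bounded_klinear_on k S nrm G \<longleftrightarrow>
     (\<forall>us vs. (\<forall>i<k. us i = vs i) \<longrightarrow> G us = G vs) \<and>
     (\<forall>us i x y a c. (\<forall>l<k. us l \<in> S) \<longrightarrow> i < k \<longrightarrow> x \<in> S \<longrightarrow> y \<in> S \<longrightarrow>
         G (us(i := a *\<^sub>R x + c *\<^sub>R y)) = a *\<^sub>R G (us(i := x)) + c *\<^sub>R G (us(i := y))) \<and>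
     (\<exists>M. \<forall>us. (\<forall>l<k. us l \<in> S) \<longrightarrow> norm (G us) \<le> M * (\<Prod>l<k. nrm (us l)))"

end

theory Submission
  imports Defs
begin


definition ON :: "(nat \<Rightarrow> 'a::real_inner) \<Rightarrow> bool" where
  "ON b \<longleftrightarrow> (\<forall>i j. inner (b i) (b j) = (if i = j then 1 else 0))"

lemma sum_delta_mult:
  "finite F \<Longrightarrow> (\<Sum>x\<in>F. f x * (if x = j then 1 else 0)) = (if j\<in>F then f j else (0::real))"
  by (induct F rule: finite_induct) auto

lemma on_sum_norm2:
  assumes "ON b" "finite F"
  shows "norm (\<Sum>j\<in>F. c j *\<^sub>R b j)^2 = (\<Sum>j\<in>F. (c j)^2)"
proof -
  have "norm (\<Sum>j\<in>F. c j *\<^sub>R b j)^2 = (\<Sum>j\<in>F. c j * (\<Sum>ja\<in>F. c ja * (if ja = j then 1 else 0)))"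
    using assms unfolding ON_def by (simp add: power2_norm_eq_inner inner_sum_left inner_sum_right)
  also have "\<dots> = (\<Sum>i\<in>F. (c i)^2)"
    using assms(2) by (simp add: sum_delta_mult power2_eq_square)
  finally show ?thesis .
qed

lemma on_summable:
  fixes b :: "nat \<Rightarrow> 'a::{real_inner,complete_space}"
  assumes "ON b" "summable (\<lambda>j. (c j)^2)"
  shows "summable (\<lambda>j. c j *\<^sub>R b j)"
proof -
  from assms(2) have C: "\<forall>e>0. \<exists>N. \<forall>m\<ge>N. \<forall>n. norm (sum (\<lambda>j. (c j)^2) {m..<n}) < e"
    by (simp add: summable_Cauchy)
  have "Cauchy (\<lambda>n. \<Sum>j<n. c j *\<^sub>R b j)"
  proof (rule metric_CauchyI)
    fix e :: real assume "0 < e"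
    then obtain N where N: "\<forall>m\<ge>N. \<forall>n. norm (sum (\<lambda>j. (c j)^2) {m..<n}) < e^2"
      using C by (meson zero_less_power)
    have *: "dist (\<Sum>j<p. c j *\<^sub>R b j) (\<Sum>j<q. c j *\<^sub>R b j) < e" if "N \<le> p" "p \<le> q" for p q
    proof -
      have "(\<Sum>j<q. c j *\<^sub>R b j) = (\<Sum>j<p. c j *\<^sub>R b j) + (\<Sum>j\<in>{p..<q}. c j *\<^sub>R b j)"
        using that by (metis sum.atLeastLessThan_concat lessThan_atLeast0 le0)
      then have "dist (\<Sum>j<p. c j *\<^sub>R b j) (\<Sum>j<q. c j *\<^sub>R b j) = norm (\<Sum>j\<in>{p..<q}. c j *\<^sub>R b j)"
        by (simp add: dist_norm norm_minus_commute)
      moreover have "norm (\<Sum>j\<in>{p..<q}. c j *\<^sub>R b j)^2 < e^2"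
      proof -
        have "\<bar>sum (\<lambda>j. (c j)^2) {p..<q}\<bar> < e^2" using N that by auto
        moreover have "sum (\<lambda>j. (c j)^2) {p..<q} \<ge> 0" by (simp add: sum_nonneg)
        ultimately show ?thesis using on_sum_norm2[OF assms(1), of "{p..<q}" c] by simp
      qed
      ultimately show ?thesis using \<open>0<e\<close> by (metis power_less_imp_less_base less_eq_real_def)
    qed
    show "\<exists>M. \<forall>m\<ge>M. \<forall>n\<ge>M. dist (\<Sum>j<m. c j *\<^sub>R b j) (\<Sum>j<n. c j *\<^sub>R b j) < e"
      by (metis * dist_commute nle_le)
  qed
  then show ?thesis by (simp add: summable_iff_convergent Cauchy_convergent_iff)
qed

lemma on_inner:
  fixes b :: "nat \<Rightarrow> 'a::{real_inner,complete_space}"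
  assumes "ON b" "summable (\<lambda>j. (c j)^2)"
  shows "inner (\<Sum>j. c j *\<^sub>R b j) (b i) = c i"
proof -
  have "inner (\<Sum>j. c j *\<^sub>R b j) (b i) = (\<Sum>j. inner (c j *\<^sub>R b j) (b i))"
    by (rule bounded_linear.suminf[OF bounded_linear_inner_left on_summable[OF assms]])
  also have "\<dots> = (\<Sum>j. if j = i then c j else 0)"
  proof -
    have "\<And>j. inner (c j *\<^sub>R b j) (b i) = (if j = i then c j else 0)"
      using assms(1) unfolding ON_def by auto
    then show ?thesis by simp
  qed
  also have "\<dots> = c i" using sums_single[of i c] by (simp add: sums_iff)
  finally show ?thesis .
qed

lemma on_norm2:
  fixes b :: "nat \<Rightarrow> 'a::{real_inner,complete_space}"
  assumes "ON b" "summable (\<lambda>j. (c j)^2)"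
  shows "norm (\<Sum>j. c j *\<^sub>R b j)^2 = (\<Sum>j. (c j)^2)"
proof -
  have "(\<lambda>n. \<Sum>j<n. c j *\<^sub>R b j) \<longlonglongrightarrow> (\<Sum>j. c j *\<^sub>R b j)"
    using on_summable[OF assms] by (rule summable_LIMSEQ)
  then have "(\<lambda>n. norm (\<Sum>j<n. c j *\<^sub>R b j)^2) \<longlonglongrightarrow> norm (\<Sum>j. c j *\<^sub>R b j)^2"
    by (intro tendsto_intros)
  moreover have "(\<lambda>n. norm (\<Sum>j<n. c j *\<^sub>R b j)^2) = (\<lambda>n. \<Sum>j<n. (c j)^2)"
    using on_sum_norm2[OF assms(1)] by auto
  ultimately show ?thesis using summable_LIMSEQ[OF assms(2)] LIMSEQ_unique by metis
qed

lemma on_bound: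
  fixes b :: "nat \<Rightarrow> 'a::{real_inner,complete_space}"
  assumes "ON b" "summable (\<lambda>j. (c j)^2)" "\<And>j. \<bar>d j\<bar> \<le> L * \<bar>c j\<bar>" "0 \<le> L"
  shows "summable (\<lambda>j. (d j)^2) \<and> norm (\<Sum>j. d j *\<^sub>R b j) \<le> L * sqrt (\<Sum>j. (c j)^2)"
proof -
  have le: "(d j)^2 \<le> L^2 * (c j)^2" for j
  proof -
    have "(d j)^2 = \<bar>d j\<bar>^2" by simp
    also have "\<dots> \<le> (L * \<bar>c j\<bar>)^2" using assms(3)[of j] by (intro power_mono) auto
    finally show ?thesis by (simp add: power_mult_distrib)
  qed
  have sL: "summable (\<lambda>j. L^2 * (c j)^2)" using assms(2) by (rule summable_mult)
  have sd: "summable (\<lambda>j. (d j)^2)"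
    by (rule summable_comparison_test[OF _ sL]) (use le in auto)
  have "norm (\<Sum>j. d j *\<^sub>R b j)^2 = (\<Sum>j. (d j)^2)" using on_norm2[OF assms(1) sd] .
  also have "\<dots> \<le> (\<Sum>j. L^2 * (c j)^2)" by (rule suminf_le[OF le sd sL])
  also have "\<dots> = (L * sqrt (\<Sum>j. (c j)^2))^2"
    using assms(4) suminf_nonneg[OF assms(2)] by (simp add: suminf_mult[OF assms(2)] power_mult_distrib)
  finally have sq: "norm (\<Sum>j. d j *\<^sub>R b j)^2 \<le> (L * sqrt (\<Sum>j. (c j)^2))^2" .
  have "norm (\<Sum>j. d j *\<^sub>R b j) \<le> L * sqrt (\<Sum>j. (c j)^2)"
    by (rule power2_le_imp_le[OF sq]) (use assms(4) suminf_nonneg[OF assms(2)] in auto)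
  with sd show ?thesis by blast
qed

lemma hb_ON: "hilbert_basis b \<Longrightarrow> ON b"
  unfolding hilbert_basis_def ON_def by blast

lemma hb_expand:
  fixes b :: "nat \<Rightarrow> 'a::{real_inner,complete_space}"
  assumes "hilbert_basis b"
  shows "(\<lambda>j. inner u (b j) *\<^sub>R b j) sums u" "summable (\<lambda>j. (inner u (b j))^2)"
    "(\<Sum>j. (inner u (b j))^2) = norm u ^ 2"
proof -
  show 1: "(\<lambda>j. inner u (b j) *\<^sub>R b j) sums u"
    using assms unfolding hilbert_basis_def sums_def by blast
  have "(\<lambda>n. norm (\<Sum>j<n. inner u (b j) *\<^sub>R b j)^2) \<longlonglongrightarrow> norm u ^2"
    using 1 unfolding sums_def by (intro tendsto_intros)
  moreover have "(\<lambda>n. norm (\<Sum>j<n. inner u (b j) *\<^sub>R b j)^2) = (\<lambda>n. \<Sum>j<n. (inner u (b j))^2)"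
    using on_sum_norm2[OF hb_ON[OF assms]] by auto
  ultimately have "(\<lambda>j. (inner u (b j))^2) sums (norm u ^2)" unfolding sums_def by simp
  then show "summable (\<lambda>j. (inner u (b j))^2)" "(\<Sum>j. (inner u (b j))^2) = norm u ^ 2"
    by (auto simp: sums_iff)
qed



lemma approx_has_integral:
  fixes f :: "real \<Rightarrow> 'b::real_normed_vector"
  assumes A: "\<And>e. e>0 \<Longrightarrow> \<exists>g I. (\<forall>x\<in>cbox a b. norm (f x - g x) \<le> e) \<and> (g has_integral I) (cbox a b) \<and> norm (I - y) \<le> e"
  shows "(f has_integral y) (cbox a b)"
  unfolding has_integral
proof (intro allI impI)
  fix \<epsilon> :: real assume "\<epsilon> > 0"
  define e where "e = \<epsilon> / (3 * (measure lborel (cbox a b) + 1))"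
  have cpos: "measure lborel (cbox a b) \<ge> 0" by simp
  have epos: "e > 0" using \<open>\<epsilon>>0\<close> cpos unfolding e_def by (simp add: field_simps) 
  have e1: "e * measure lborel (cbox a b) < \<epsilon>/3" "e \<le> \<epsilon>/3"
    using \<open>\<epsilon>>0\<close> cpos unfolding e_def by (auto simp: field_simps)
  obtain g I where g: "\<forall>x\<in>cbox a b. norm (f x - g x) \<le> e" "(g has_integral I) (cbox a b)" "norm (I - y) \<le> e"
    using A[OF epos] by blast
  obtain \<gamma> where \<gamma>: "gauge \<gamma>" "\<And>\<D>. \<D> tagged_division_of (cbox a b) \<and> \<gamma> fine \<D> \<Longrightarrow>
        norm ((\<Sum>(x, k)\<in>\<D>. measure lborel k *\<^sub>R g x) - I) < \<epsilon>/3"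
    using g(2) \<open>\<epsilon>>0\<close> unfolding has_integral by (meson zero_less_divide_iff zero_less_numeral)
  show "\<exists>\<gamma>. gauge \<gamma> \<and> (\<forall>\<D>. \<D> tagged_division_of cbox a b \<and> \<gamma> fine \<D> \<longrightarrow>
          norm ((\<Sum>(x, k)\<in>\<D>. measure lborel k *\<^sub>R f x) - y) < \<epsilon>)"
  proof (intro exI conjI allI impI)
    show "gauge \<gamma>" by fact
    fix \<D> assume D: "\<D> tagged_division_of cbox a b \<and> \<gamma> fine \<D>"
    have eq: "(\<Sum>(x, k)\<in>\<D>. measure lborel k *\<^sub>R f x) - y = (\<Sum>(x, k)\<in>\<D>. measure lborel k *\<^sub>R (f x - g x))
       + ((\<Sum>(x, k)\<in>\<D>. measure lborel k *\<^sub>R g x) - I) + (I - y)"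
      by (simp add: scaleR_diff_right sum_subtractf case_prod_unfold)
    have n1: "norm (\<Sum>(x, k)\<in>\<D>. measure lborel k *\<^sub>R (f x - g x)) \<le> e * measure lborel (cbox a b)"
      using D g(1) by (intro rsum_bound) auto
    have "norm ((\<Sum>(x, k)\<in>\<D>. measure lborel k *\<^sub>R f x) - y) \<le> norm (\<Sum>(x, k)\<in>\<D>. measure lborel k *\<^sub>R (f x - g x))
       + norm ((\<Sum>(x, k)\<in>\<D>. measure lborel k *\<^sub>R g x) - I) + norm (I - y)"
      unfolding eq by (meson norm_triangle_ineq add_mono order_trans order_refl)
    also have "\<dots> < \<epsilon>" using n1 e1 \<gamma>(2)[OF D] g(3) by linarith
    finally show "norm ((\<Sum>(x, k)\<in>\<D>. measure lborel k *\<^sub>R f x) - y) < \<epsilon>" .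
  qed
qed

lemma suminf_tail:
  fixes w :: "nat \<Rightarrow> 'b::real_normed_vector"
  assumes "summable w"
  shows "suminf w - (\<Sum>j<N. w j) = (\<Sum>j. if N \<le> j then w j else 0)"
proof -
  have "(\<Sum>j. if j < N then w j else 0) = (\<Sum>j<N. if j < N then w j else 0)"
    by (rule suminf_finite) auto
  then have "(\<Sum>j<N. w j) = (\<Sum>j. if j < N then w j else 0)" by simp
  moreover have "summable (\<lambda>j. if j < N then w j else 0)" by (rule summable_finite[of "{..<N}"]) auto
  ultimately have "suminf w - (\<Sum>j<N. w j) = (\<Sum>j. w j - (if j < N then w j else 0))"
    using suminf_diff[OF assms] by simp
  also have "\<dots> = (\<Sum>j. if N \<le> j then w j else 0)"
    by (rule arg_cong[where f=suminf]) auto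
  finally show ?thesis .
qed

lemma tail_to_0:
  assumes "summable (w::nat \<Rightarrow> real)"
  shows "(\<lambda>N. \<Sum>j. if N \<le> j then w j else 0) \<longlonglongrightarrow> 0"
proof -
  have "(\<lambda>N. suminf w - (\<Sum>j<N. w j)) \<longlonglongrightarrow> suminf w - suminf w"
    by (intro tendsto_intros summable_LIMSEQ assms)
  then show ?thesis using suminf_tail[OF assms] by simp
qed

lemma real_piece:
  fixes \<mu> c a b :: real
  assumes "\<mu> > 0" "a \<le> 0" "0 \<le> b"
  shows "((\<lambda>x. if x \<in> {..0} then exp (x * \<mu>) * c else 0) has_integral (c * (1 - exp (a * \<mu>)) / \<mu>)) (cbox a b)"
proof -
  have "((\<lambda>x. exp (x * \<mu>) * c) has_integral (c * exp (0 * \<mu>) / \<mu> - c * exp (a * \<mu>) / \<mu>)) {a..0}"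
    using assms(2)
    by (intro fundamental_theorem_of_calculus)
       (use assms(1) in \<open>auto intro!: derivative_eq_intros simp flip: has_real_derivative_iff_has_vector_derivative\<close>)
  then have "((\<lambda>x. exp (x * \<mu>) * c) has_integral (c * (1 - exp (a * \<mu>)) / \<mu>)) {a..0}"
    by (simp add: diff_divide_distrib right_diff_distrib)
  then have "((\<lambda>x. if x \<in> {a..0} then exp (x * \<mu>) * c else 0) has_integral (c * (1 - exp (a * \<mu>)) / \<mu>)) {a..b}"
    using assms by (subst has_integral_restrict) auto
  then show ?thesis unfolding box_real(2) by (rule has_integral_eq[rotated]) auto
qed



lemma tail_vec:
  fixes b :: "nat \<Rightarrow> 'a::{real_inner,complete_space}"
  assumes "ON b" "summable (\<lambda>j. (w j)^2)"
  shows "(\<Sum>j. w j *\<^sub>R b j) - (\<Sum>j<N. w j *\<^sub>R b j) = (\<Sum>j. (if N \<le> j then w j else 0) *\<^sub>R b j)"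
  using suminf_tail[OF on_summable[OF assms], of N] by (simp add: if_distrib[of "\<lambda>x. x *\<^sub>R _"] cong: if_cong)

lemma cb1: "s \<le> 0 \<Longrightarrow> (\<mu>::real) > 0 \<Longrightarrow> \<bar>exp (s * \<mu>) * c\<bar> \<le> 1 * \<bar>c\<bar>"
  by (simp add: abs_mult mult_nonpos_nonneg mult_left_le_one_le)

lemma cb2:
  assumes "a \<le> 0" "\<delta> \<le> \<mu>" "(\<delta>::real) > 0"
  shows "\<bar>c * (1 - exp (a * \<mu>)) / \<mu>\<bar> \<le> (1/\<delta>) * \<bar>c\<bar>"
proof -
  have "exp (a * \<mu>) \<le> 1" using assms by (simp add: mult_nonpos_nonneg)
  then have "\<bar>1 - exp (a * \<mu>)\<bar> \<le> 1" by simp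
  moreover have "1 / \<mu> \<le> 1 / \<delta>" using assms by (simp add: frac_le)
  ultimately have "\<bar>1 - exp (a * \<mu>)\<bar> / \<mu> \<le> 1 / \<delta>" using assms
    by (metis divide_right_mono dual_order.trans less_le_trans order.strict_implies_order)
  then have "\<bar>c\<bar> * (\<bar>1 - exp (a * \<mu>)\<bar> / \<mu>) \<le> \<bar>c\<bar> * (1/\<delta>)" by (rule mult_left_mono) simp
  moreover have "\<bar>c * (1 - exp (a * \<mu>)) / \<mu>\<bar> = \<bar>c\<bar> * (\<bar>1 - exp (a * \<mu>)\<bar> / \<mu>)"
    using assms by (simp add: abs_mult abs_divide)
  ultimately show ?thesis by (simp add: mult.commute)
qed

lemma cb4:
  assumes "\<delta> \<le> \<mu>" "(\<delta>::real) > 0"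
  shows "\<bar>c / \<mu>\<bar> \<le> (1/\<delta>) * \<bar>c\<bar>"
proof -
  have mp: "\<mu> > 0" using assms by simp
  have "1 / \<mu> \<le> 1 / \<delta>" using assms by (simp add: frac_le)
  then have "\<bar>c\<bar> * (1 / \<mu>) \<le> \<bar>c\<bar> * (1/\<delta>)" by (rule mult_left_mono) simp
  moreover have "\<bar>c / \<mu>\<bar> = \<bar>c\<bar> * (1 / \<mu>)" using mp by (simp add: abs_divide)
  ultimately show ?thesis by (simp only: mult.commute)
qed

lemma cb3:
  assumes "a \<le> 0" "\<delta> \<le> \<mu>" "(\<delta>::real) > 0"
  shows "\<bar>c / \<mu> - c * (1 - exp (a * \<mu>)) / \<mu>\<bar> \<le> (exp (a * \<delta>) / \<delta>) * \<bar>c\<bar>"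
proof -
  have mu: "\<mu> > 0" using assms by simp
  have "c / \<mu> - c * (1 - exp (a * \<mu>)) / \<mu> = c * exp (a * \<mu>) / \<mu>" using mu by (simp add: field_simps)
  moreover have "exp (a * \<mu>) \<le> exp (a * \<delta>)" using assms by (simp add: mult_left_mono_neg)
  moreover have "exp (a * \<mu>) / \<mu> \<le> exp (a * \<delta>) / \<delta>"
    using assms mu by (meson calculation(2) exp_gt_zero frac_le less_imp_le)
  then have "\<bar>c\<bar> * (exp (a * \<mu>) / \<mu>) \<le> \<bar>c\<bar> * (exp (a * \<delta>) / \<delta>)" by (rule mult_left_mono) simp
  moreover have "\<bar>c * exp (a * \<mu>) / \<mu>\<bar> = \<bar>c\<bar> * (exp (a * \<mu>) / \<mu>)" using mu by (simp add: abs_mult abs_divide)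
  ultimately show ?thesis using \<open>c / \<mu> - c * (1 - exp (a * \<mu>)) / \<mu> = c * exp (a * \<mu>) / \<mu>\<close> by (simp add: mult.commute)
qed

lemma on_integral:
  fixes b :: "nat \<Rightarrow> 'a::{real_inner,complete_space}"
  assumes ON: "ON b" and sc: "summable (\<lambda>j. (c j)^2)" and dpos: "\<delta> > 0" and mu: "\<And>j. \<delta> \<le> \<mu> j"
  shows "((\<lambda>s. \<Sum>j. (exp (s * \<mu> j) * c j) *\<^sub>R b j) has_integral (\<Sum>j. (c j / \<mu> j) *\<^sub>R b j)) {..0}"
proof -
  define F where "F s = (\<Sum>j. (exp (s * \<mu> j) * c j) *\<^sub>R b j)" for s
  define H where "H a = (\<Sum>j. (c j * (1 - exp (a * \<mu> j)) / \<mu> j) *\<^sub>R b j)" for a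
  define T where "T N = (\<Sum>j. (if N \<le> j then c j else 0)^2)" for N
  have mup: "\<mu> j > 0" for j using mu[of j] dpos by simp
  have sT: "summable (\<lambda>j. (if N \<le> j then c j else 0)^2)" for N
    by (rule summable_comparison_test[OF _ sc]) auto
  have T0: "(\<lambda>N. sqrt (T N)) \<longlonglongrightarrow> 0"
  proof -
    have "T = (\<lambda>N. \<Sum>j. if N \<le> j then (c j)^2 else 0)"
      unfolding T_def by (intro ext arg_cong[where f=suminf]) auto
    then have "T \<longlonglongrightarrow> 0" using tail_to_0[OF sc] by simp
    then show ?thesis using tendsto_real_sqrt by fastforce
  qed
  have sF: "summable (\<lambda>j. (exp (s * \<mu> j) * c j)^2)" if "s \<le> 0" for s
    using on_bound[OF ON sc, of "\<lambda>j. exp (s * \<mu> j) * c j" 1] cb1[OF that mup] by auto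
  have sH: "summable (\<lambda>j. (c j * (1 - exp (a * \<mu> j)) / \<mu> j)^2)" if "a \<le> 0" for a
    using on_bound[OF ON sc, of "\<lambda>j. c j * (1 - exp (a * \<mu> j)) / \<mu> j" "1/\<delta>"] cb2[OF that mu dpos] dpos
    by auto
  have sh: "summable (\<lambda>j. (c j / \<mu> j)^2)"
    using on_bound[OF ON sc, of "\<lambda>j. c j / \<mu> j" "1/\<delta>"] cb4[OF mu dpos] dpos
    by auto
  have stepA: "((\<lambda>x. if x \<in> {..0} then F x else 0) has_integral H a) (cbox a bb)" if ab: "a \<le> 0" "0 \<le> bb" for a bb
  proof (rule approx_has_integral)
    fix e :: real assume "e > 0"
    then have "0 < min e (e * \<delta>)" using dpos by simp
    from order_tendstoD(2)[OF T0 this] obtain N where N: "sqrt (T N) < min e (e * \<delta>)"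
      by (auto simp: eventually_sequentially)
    define g where "g x = (\<Sum>j<N. (if x \<in> {..0} then exp (x * \<mu> j) * c j else 0) *\<^sub>R b j)" for x
    define I where "I = (\<Sum>j<N. (c j * (1 - exp (a * \<mu> j)) / \<mu> j) *\<^sub>R b j)"
    have gi: "(g has_integral I) (cbox a bb)"
      unfolding g_def I_def
      by (intro has_integral_sum has_integral_scaleR_left real_piece mup ab) auto
    have gn: "norm ((if x \<in> {..0} then F x else 0) - g x) \<le> e" if "x \<in> cbox a bb" for x
    proof (cases "x \<le> 0")
      case True
      have "(if x \<in> {..0} then F x else 0) - g x = F x - (\<Sum>j<N. (exp (x * \<mu> j) * c j) *\<^sub>R b j)"
        using True by (simp add: g_def)
      also have "\<dots> = (\<Sum>j. (if N \<le> j then exp (x * \<mu> j) * c j else 0) *\<^sub>R b j)"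
        unfolding F_def by (rule tail_vec[OF ON sF[OF True]])
      finally have eq: "(if x \<in> {..0} then F x else 0) - g x = \<dots>" .
      have "norm (\<Sum>j. (if N \<le> j then exp (x * \<mu> j) * c j else 0) *\<^sub>R b j) \<le> 1 * sqrt (T N)"
        unfolding T_def
        by (rule conjunct2[OF on_bound[OF ON sT]]) (use cb1[OF True mup] in auto)
      then show ?thesis using eq N by simp
    next
      case False
      then show ?thesis using \<open>e>0\<close> by (simp add: g_def)
    qed
    have "H a - I = (\<Sum>j. (if N \<le> j then c j * (1 - exp (a * \<mu> j)) / \<mu> j else 0) *\<^sub>R b j)"
      unfolding H_def I_def by (rule tail_vec[OF ON sH[OF ab(1)]])
    moreover have "norm (\<Sum>j. (if N \<le> j then c j * (1 - exp (a * \<mu> j)) / \<mu> j else 0) *\<^sub>R b j) \<le> (1/\<delta>) * sqrt (T N)"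
      unfolding T_def
      by (rule conjunct2[OF on_bound[OF ON sT]]) (use cb2[OF ab(1) mu dpos] dpos in auto)
    moreover have "(1/\<delta>) * sqrt (T N) \<le> e" using N dpos by (simp add: field_simps)
    ultimately have "norm (H a - I) \<le> e" by simp
    then have "norm (I - H a) \<le> e" by (simp add: norm_minus_commute)
    then show "\<exists>g I. (\<forall>x\<in>cbox a bb. norm ((if x \<in> {..0} then F x else 0) - g x) \<le> e) \<and>
             (g has_integral I) (cbox a bb) \<and> norm (I - H a) \<le> e"
      using gi gn by blast
  qed
  define h where "h = (\<Sum>j. (c j / \<mu> j) *\<^sub>R b j)"
  define S' where "S' = sqrt (\<Sum>j. (c j)^2) / \<delta>"
  have S'0: "S' \<ge> 0" unfolding S'_def using dpos suminf_nonneg[OF sc] by simp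
  have stepB: "norm (H a - h) \<le> exp (a * \<delta>) * S'" if "a \<le> 0" for a
  proof -
    have "h - H a = (\<Sum>j. (c j / \<mu> j - c j * (1 - exp (a * \<mu> j)) / \<mu> j) *\<^sub>R b j)"
      unfolding h_def H_def
      by (simp add: suminf_diff[OF on_summable[OF ON sh] on_summable[OF ON sH[OF that]]] scaleR_diff_left)
    moreover have "norm (\<Sum>j. (c j / \<mu> j - c j * (1 - exp (a * \<mu> j)) / \<mu> j) *\<^sub>R b j)
        \<le> (exp (a * \<delta>) / \<delta>) * sqrt (\<Sum>j. (c j)^2)"
      by (rule conjunct2[OF on_bound[OF ON sc]]) (use cb3[OF that mu dpos] dpos in auto)
    ultimately show ?thesis by (simp add: S'_def norm_minus_commute)
  qed
  have notbox: "\<not> (\<exists>a b. {..0::real} = cbox a b)"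
  proof
    assume "\<exists>a b. {..0::real} = cbox a b"
    then obtain a b where ab: "{..0::real} = cbox a b" by blast
    then have "a \<le> 0" by (metis atMost_iff box_real(2) atLeastAtMost_iff order_refl)
    then have "a - 1 \<in> cbox a b" using ab by auto
    then show False by simp
  qed
  have "(F has_integral h) {..0}"
  proof (subst has_integral_alt, subst if_not_P[OF notbox], intro allI impI)
    fix \<epsilon> :: real assume "\<epsilon> > 0"
    define B where "B = max 1 (ln ((S' + 1) / \<epsilon>) / \<delta>)"
    have Bp: "B > 0" unfolding B_def by simp
    have expB: "exp (- B * \<delta>) \<le> \<epsilon> / (S' + 1)"
    proof -
      have "ln ((S' + 1) / \<epsilon>) / \<delta> \<le> B" unfolding B_def by simp
      then have "ln ((S' + 1) / \<epsilon>) / \<delta> * \<delta> \<le> B * \<delta>" using dpos by (intro mult_right_mono) auto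
      then have "ln ((S' + 1) / \<epsilon>) \<le> B * \<delta>" using dpos by simp
      then have "- B * \<delta> \<le> ln (\<epsilon> / (S' + 1))"
        using \<open>\<epsilon>>0\<close> S'0 by (simp add: ln_div)
      then have "exp (- B * \<delta>) \<le> exp (ln (\<epsilon> / (S' + 1)))" by simp
      then show ?thesis using \<open>\<epsilon>>0\<close> S'0 by simp
    qed
    show "\<exists>B>0. \<forall>a b. ball 0 B \<subseteq> cbox a b \<longrightarrow>
          (\<exists>z. ((\<lambda>x. if x \<in> {..0} then F x else 0) has_integral z) (cbox a b) \<and> norm (z - h) < \<epsilon>)"
    proof (intro exI conjI allI impI)
      show "B > 0" by fact
      fix a b :: real assume sub: "ball 0 B \<subseteq> cbox a b"
      have "(0::real) \<in> ball 0 B" using Bp by simp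
      then have "0 \<in> cbox a b" using sub by blast
      then have a0: "a \<le> 0" and b0: "0 \<le> b" by auto
      have aB: "a \<le> - B"
      proof (rule ccontr)
        assume "\<not> a \<le> - B"
        then have "(a - B) / 2 \<in> ball 0 B" using a0 Bp by (auto simp: dist_real_def)
        then have "(a - B) / 2 \<in> cbox a b" using sub by blast
        then show False using \<open>\<not> a \<le> - B\<close> by auto
      qed
      show "((\<lambda>x. if x \<in> {..0} then F x else 0) has_integral H a) (cbox a b)" using stepA[OF a0 b0] .
      have "a * \<delta> \<le> (- B) * \<delta>" using aB dpos by (intro mult_right_mono) auto
      then have "exp (a * \<delta>) \<le> exp (- B * \<delta>)" by simp
      then have "exp (a * \<delta>) * S' \<le> \<epsilon> / (S' + 1) * S'" using expB S'0 by (meson order_trans mult_right_mono)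
      also have "\<dots> < \<epsilon>" using S'0 \<open>\<epsilon>>0\<close> by (simp add: field_simps)
      finally show "norm (H a - h) < \<epsilon>" using stepB[OF a0] by linarith
    qed
  qed
  then show ?thesis unfolding F_def h_def .
qed



lemma Fk_scale:
  assumes G: "bounded_klinear_on k H nrm G" and Hs: "subspace H" and x: "x \<in> H"
  shows "G (\<lambda>_. t *\<^sub>R x) = t^k *\<^sub>R G (\<lambda>_. x)"
proof -
  have tx: "t *\<^sub>R x \<in> H" using Hs x by (rule subspace_scale)
  have agree: "\<And>us vs. (\<forall>i<k. us i = vs i) \<Longrightarrow> G us = G vs"
   and lin: "\<And>us i x y a c. (\<forall>l<k. us l \<in> H) \<Longrightarrow> i < k \<Longrightarrow> x \<in> H \<Longrightarrow> y \<in> H \<Longrightarrow>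
         G (us(i := a *\<^sub>R x + c *\<^sub>R y)) = a *\<^sub>R G (us(i := x)) + c *\<^sub>R G (us(i := y))"
    using G unfolding bounded_klinear_on_def by blast+
  have "n \<le> k \<Longrightarrow> G (\<lambda>i. if i < n then t *\<^sub>R x else x) = t^n *\<^sub>R G (\<lambda>_. x)" for n
  proof (induction n)
    case 0 then show ?case by simp
  next
    case (Suc n)
    define us where "us = (\<lambda>i. if i < n then t *\<^sub>R x else x)"
    have mem: "\<forall>l<k. us l \<in> H" using tx x by (auto simp: us_def)
    have nk: "n < k" using Suc.prems by simp
    have "G (us(n := t *\<^sub>R x + 0 *\<^sub>R x)) = t *\<^sub>R G (us(n := x)) + 0 *\<^sub>R G (us(n := x))"
      by (rule lin[OF mem nk x x])
    moreover have "us(n := x) = us" by (auto simp: us_def)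
    moreover have "us(n := t *\<^sub>R x + 0 *\<^sub>R x) = (\<lambda>i. if i < Suc n then t *\<^sub>R x else x)"
      by (auto simp: us_def)
    ultimately have "G (\<lambda>i. if i < Suc n then t *\<^sub>R x else x) = t *\<^sub>R G us" by simp
    also have "\<dots> = t^Suc n *\<^sub>R G (\<lambda>_. x)" using Suc by (simp add: us_def)
    finally show ?case .
  qed
  then have "G (\<lambda>i. if i < k then t *\<^sub>R x else x) = t^k *\<^sub>R G (\<lambda>_. x)" by simp
  moreover have "G (\<lambda>i. if i < k then t *\<^sub>R x else x) = G (\<lambda>_. t *\<^sub>R x)" by (rule agree) simp
  ultimately show ?thesis by simp
qed

lemma center_expand:
  assumes ON: "ON b" and xi: "\<xi> \<in> span (b ` {..<m})"
  shows "\<xi> = (\<Sum>j<m. inner \<xi> (b j) *\<^sub>R b j)"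
  using xi
proof (induction rule: span_induct_alt)
  case base then show ?case by simp
next
  case (step c x y)
  then obtain i where i: "i < m" "x = b i" by auto
  have bi: "(\<Sum>j<m. inner (b i) (b j) *\<^sub>R b j) = b i"
  proof -
    have "(\<Sum>j<m. inner (b i) (b j) *\<^sub>R b j) = (\<Sum>j<m. if i = j then b j else 0)"
      using ON unfolding ON_def by (intro sum.cong) auto
    also have "\<dots> = b i" using i(1) by simp
    finally show ?thesis .
  qed
  have "(\<Sum>j<m. inner (c *\<^sub>R x + y) (b j) *\<^sub>R b j) = c *\<^sub>R (\<Sum>j<m. inner x (b j) *\<^sub>R b j) + (\<Sum>j<m. inner y (b j) *\<^sub>R b j)"
    by (simp add: inner_add_left scaleR_add_left sum.distrib scaleR_sum_right)
  then show ?case using step.IH bi i(2) by simp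
qed



lemma fixed:
  fixes b :: "nat \<Rightarrow> 'a::{real_inner,complete_space}" and bt :: "nat \<Rightarrow> real"
    and A :: "'a \<Rightarrow> 'a" and Fk :: "(nat \<Rightarrow> 'a) \<Rightarrow> 'a"
  assumes hb: "hilbert_basis b"
    and m_pos: "1 \<le> m" and k_ge: "2 \<le> k"
    and crit: "\<And>j. j < m \<Longrightarrow> bt j = bt 0"
    and alo: "a \<le> bt 0" and bhi: "\<And>j. m \<le> j \<Longrightarrow> bt j \<le> bb"
    and ab1: "0 > 2 * real k * a" and ab2: "2 * real k * a > bb"
    and Hs: "subspace H" and domsub: "dom_L b bt \<subseteq> H"
    and Kp: "\<forall>u \<in> dom_L b bt. norm (A u) \<le> K * (norm (op_L b bt u) + norm u)"
    and Fkb: "bounded_klinear_on k H (\<lambda>u. norm (A u)) Fk"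
    and Mp: "\<forall>us. (\<forall>l<k. us l \<in> H) \<longrightarrow> norm (Fk us) \<le> M * (\<Prod>l<k. norm (A (us l)))"
    and xi: "\<xi> \<in> center_space b m"
  shows "\<exists>h. ((\<lambda>s. exp_Ls b bt m (- s) (proj_s b m (Fk (\<lambda>_. exp_Lc b bt m s \<xi>)))) has_integral h) {..0}
       \<and> h - inv_neg_Ls b bt m (proj_s b m (Fk (\<lambda>_. \<xi>))) \<in> H
       \<and> norm (A (h - inv_neg_Ls b bt m (proj_s b m (Fk (\<lambda>_. \<xi>)))))
           \<le> (max K 0 * (real k / (real k * a - bb) + real k / ((real k * a - bb) * (- bb))) * max M 0)
              * \<bar>bt 0\<bar> * norm (A \<xi>) ^ k"
proof -
  define \<delta> where "\<delta> = real k * a - bb"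
  define \<gamma> where "\<gamma> = - bb"
  define bs where "bs = bt 0"
  have kpos: "real k > 0" using k_ge by simp
  have aneg: "a < 0" using ab1 kpos by (simp add: mult_less_0_iff)
  have ka: "real k * a < 0" using kpos aneg by (simp add: mult_pos_neg)
  have e2: "2 * real k * a = 2 * (real k * a)" by simp
  have dpos: "\<delta> > 0" unfolding \<delta>_def using ab2 ka e2 by linarith
  have gpos: "\<gamma> > 0" unfolding \<gamma>_def using ab2 ka e2 by linarith
  have ON: "ON b" using hb by (rule hb_ON)
  have bdom: "b j \<in> dom_L b bt" for j
  proof -
    have "(\<lambda>i. (bt i * inner (b j) (b i))^2) = (\<lambda>i. if i = j then (bt j)^2 else 0)"
      using ON unfolding ON_def by auto
    then show ?thesis unfolding dom_L_def using sums_single[of j "\<lambda>i. (bt i)^2"] by (auto simp: sums_iff)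
  qed
  have cH: "center_space b m \<subseteq> H"
    unfolding center_space_def by (rule span_minimal) (use bdom domsub Hs in auto)
  have xiH: "\<xi> \<in> H" using xi cH by blast
  have xi_exp: "\<xi> = (\<Sum>j<m. inner \<xi> (b j) *\<^sub>R b j)"
    using center_expand[OF ON] xi unfolding center_space_def by blast
  have Lc: "exp_Lc b bt m s \<xi> = exp (s * bs) *\<^sub>R \<xi>" for s
  proof -
    have "exp_Lc b bt m s \<xi> = (\<Sum>j<m. exp (s * bs) *\<^sub>R (inner \<xi> (b j) *\<^sub>R b j))"
      unfolding exp_Lc_def
    proof (intro sum.cong refl)
      fix j assume "j \<in> {..<m}"
      then have "bt j = bs" unfolding bs_def by (intro crit) simp
      then show "(exp (s * bt j) * inner \<xi> (b j)) *\<^sub>R b j = exp (s * bs) *\<^sub>R (inner \<xi> (b j) *\<^sub>R b j)"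
        by simp
    qed
    also have "\<dots> = exp (s * bs) *\<^sub>R (\<Sum>j<m. inner \<xi> (b j) *\<^sub>R b j)" by (simp add: scaleR_sum_right)
    also have "\<dots> = exp (s * bs) *\<^sub>R \<xi>" using xi_exp by simp
    finally show ?thesis .
  qed
  define v where "v = Fk (\<lambda>_. \<xi>)"
  define vc where "vc j = inner v (b j)" for j
  define cc where "cc j = (if m \<le> j then vc j else 0)" for j
  define \<mu> where "\<mu> j = (if m \<le> j then real k * bs - bt j else \<delta>)" for j
  have svc: "summable (\<lambda>j. (vc j)^2)" and nv: "(\<Sum>j. (vc j)^2) = norm v ^ 2"
    using hb_expand[OF hb, of v] unfolding vc_def by auto
  have scc: "summable (\<lambda>j. (cc j)^2)"
    by (rule summable_comparison_test[OF _ svc]) (auto simp: cc_def)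
  have ccvc: "\<bar>cc j\<bar> \<le> 1 * \<bar>vc j\<bar>" for j by (simp add: cc_def)
  have mu: "\<delta> \<le> \<mu> j" for j
  proof (cases "m \<le> j")
    case True
    have "real k * a \<le> real k * bs" using alo kpos unfolding bs_def by simp
    then show ?thesis using True bhi[OF True] unfolding \<mu>_def \<delta>_def by simp
  qed (simp add: \<mu>_def)
  have integrand: "exp_Ls b bt m (- s) (proj_s b m (Fk (\<lambda>_. exp_Lc b bt m s \<xi>)))
      = (\<Sum>j. (exp (s * \<mu> j) * cc j) *\<^sub>R b j)" for s
  proof -
    define t where "t = exp (s * bs) ^ k"
    have F: "Fk (\<lambda>_. exp_Lc b bt m s \<xi>) = t *\<^sub>R v"
      unfolding Lc t_def v_def by (rule Fk_scale[OF Fkb Hs xiH])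
    have "proj_s b m (t *\<^sub>R v) = (\<Sum>j. (t * cc j) *\<^sub>R b j)"
      unfolding proj_s_def cc_def vc_def by (intro arg_cong[where f=suminf] ext) auto
    moreover have stc: "summable (\<lambda>j. (t * cc j)^2)"
      using summable_mult[OF scc, of "t^2"] by (simp add: power_mult_distrib)
    ultimately have ip: "inner (proj_s b m (t *\<^sub>R v)) (b j) = t * cc j" for j
      using on_inner[OF ON stc] by simp
    have "exp_Ls b bt m (- s) (proj_s b m (t *\<^sub>R v))
        = (\<Sum>j. (if m \<le> j then exp (- s * bt j) * (t * cc j) else 0) *\<^sub>R b j)"
      unfolding exp_Ls_def ip by simp
    also have "\<dots> = (\<Sum>j. (exp (s * \<mu> j) * cc j) *\<^sub>R b j)"
    proof (intro arg_cong[where f=suminf] ext)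
      fix j
      show "(if m \<le> j then exp (- s * bt j) * (t * cc j) else 0) *\<^sub>R b j = (exp (s * \<mu> j) * cc j) *\<^sub>R b j"
      proof (cases "m \<le> j")
        case True
        have "exp (- s * bt j) * t = exp (- s * bt j + real k * (s * bs))"
        proof -
          have "exp (s * bs) ^ k = exp (real k * (s * bs))" by (rule exp_of_nat_mult[symmetric])
          then show ?thesis by (simp only: t_def exp_add)
        qed
        also have "\<dots> = exp (s * \<mu> j)" using True unfolding \<mu>_def by (simp add: algebra_simps)
        finally show ?thesis using True by (simp add: mult.assoc)
      qed (simp add: cc_def)
    qed
    finally show ?thesis using F by simp
  qed
  define h where "h = (\<Sum>j. (cc j / \<mu> j) *\<^sub>R b j)"
  have hint: "((\<lambda>s. exp_Ls b bt m (- s) (proj_s b m (Fk (\<lambda>_. exp_Lc b bt m s \<xi>)))) has_integral h) {..0}"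
    unfolding integrand h_def by (rule on_integral[OF ON scc dpos mu])
  have ipv: "inner (proj_s b m v) (b j) = cc j" for j
  proof -
    have "proj_s b m v = (\<Sum>j. cc j *\<^sub>R b j)" unfolding proj_s_def cc_def vc_def by simp
    then show ?thesis using on_inner[OF ON scc] by simp
  qed
  have btneg: "m \<le> j \<Longrightarrow> bt j \<le> - \<gamma>" for j using bhi unfolding \<gamma>_def by simp
  have inv: "inv_neg_Ls b bt m (proj_s b m v) = (\<Sum>j. (- cc j / bt j) *\<^sub>R b j)"
    unfolding inv_neg_Ls_def ipv by (intro arg_cong[where f=suminf] ext) (auto simp: cc_def)
  define dd where "dd j = cc j / \<mu> j + cc j / bt j" for j
  have b1: "\<bar>cc j / \<mu> j\<bar> \<le> (1/\<delta>) * \<bar>cc j\<bar>" for j by (rule cb4[OF mu dpos])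
  have b2: "\<bar>- cc j / bt j\<bar> \<le> (1/\<gamma>) * \<bar>cc j\<bar>" for j
  proof (cases "m \<le> j")
    case True
    then show ?thesis using cb4[of \<gamma> "- bt j" "cc j"] btneg[OF True] gpos by simp
  qed (simp add: cc_def)
  have sh1: "summable (\<lambda>j. (cc j / \<mu> j)^2)"
    using on_bound[OF ON scc b1] dpos by simp
  have sh2: "summable (\<lambda>j. (- cc j / bt j)^2)"
    using on_bound[OF ON scc b2] gpos by simp
  have Deq: "h - inv_neg_Ls b bt m (proj_s b m v) = (\<Sum>j. dd j *\<^sub>R b j)"
  proof -
    have "h - inv_neg_Ls b bt m (proj_s b m v) = (\<Sum>j. (cc j / \<mu> j) *\<^sub>R b j - (- cc j / bt j) *\<^sub>R b j)"
      unfolding h_def inv by (rule suminf_diff[OF on_summable[OF ON sh1] on_summable[OF ON sh2]])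
    also have "\<dots> = (\<Sum>j. dd j *\<^sub>R b j)"
      by (intro arg_cong[where f=suminf] ext) (simp add: dd_def scaleR_add_left)
    finally show ?thesis .
  qed
  have mupos: "\<mu> j > 0" for j using mu[of j] dpos by simp
  define L1 where "L1 = real k * \<bar>bs\<bar> / \<delta>"
  define L2 where "L2 = real k * \<bar>bs\<bar> / (\<delta> * \<gamma>)"
  have L1p: "L1 \<ge> 0" and L2p: "L2 \<ge> 0" unfolding L1_def L2_def using dpos gpos by auto
  have db1: "\<bar>bt j * dd j\<bar> \<le> L1 * \<bar>vc j\<bar>" for j
  proof (cases "m \<le> j")
    case True
    have btn: "bt j < 0" using btneg[OF True] gpos by simp
    have "bt j * dd j = cc j * (real k * bs) / \<mu> j"
      using True btn mupos[of j] unfolding dd_def \<mu>_def by (simp add: field_simps)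
    then have "\<bar>bt j * dd j\<bar> = \<bar>cc j\<bar> * (real k * \<bar>bs\<bar>) / \<mu> j"
      using mupos[of j] by (simp add: abs_mult abs_divide)
    also have "\<dots> \<le> \<bar>cc j\<bar> * (real k * \<bar>bs\<bar>) / \<delta>"
      using mu[of j] dpos by (intro divide_left_mono) auto
    also have "\<dots> = L1 * \<bar>vc j\<bar>" using True unfolding L1_def cc_def by simp
    finally show ?thesis .
  qed (simp add: dd_def cc_def L1p)
  have db2: "\<bar>dd j\<bar> \<le> L2 * \<bar>vc j\<bar>" for j
  proof (cases "m \<le> j")
    case True
    have btn: "bt j < 0" using btneg[OF True] gpos by simp
    have "dd j = cc j * (real k * bs) / (\<mu> j * bt j)"
      using True btn mupos[of j] unfolding dd_def \<mu>_def by (simp add: field_simps)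
    then have "\<bar>dd j\<bar> = \<bar>cc j\<bar> * (real k * \<bar>bs\<bar>) / (\<mu> j * \<bar>bt j\<bar>)"
      using mupos[of j] by (simp add: abs_mult abs_divide)
    also have "\<dots> \<le> \<bar>cc j\<bar> * (real k * \<bar>bs\<bar>) / (\<delta> * \<gamma>)"
    proof (intro divide_left_mono)
      show "\<delta> * \<gamma> \<le> \<mu> j * \<bar>bt j\<bar>"
        using mu[of j] dpos gpos btneg[OF True] by (intro mult_mono) auto
    qed (use dpos gpos mupos[of j] btn in \<open>auto simp: zero_less_mult_iff mult_less_0_iff\<close>)
    also have "\<dots> = L2 * \<bar>vc j\<bar>" using True unfolding L2_def cc_def by simp
    finally show ?thesis .
  qed (simp add: dd_def cc_def L2p)
  have sqv: "sqrt (\<Sum>j. (vc j)^2) = norm v" using nv by simp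
  obtain sdd: "summable (\<lambda>j. (dd j)^2)" and nD: "norm (\<Sum>j. dd j *\<^sub>R b j) \<le> L2 * norm v"
    using on_bound[OF ON svc db2 L2p] sqv by auto
  obtain sbd: "summable (\<lambda>j. (bt j * dd j)^2)" and nLD: "norm (\<Sum>j. (bt j * dd j) *\<^sub>R b j) \<le> L1 * norm v"
    using on_bound[OF ON svc db1 L1p] sqv by auto
  define D where "D = (\<Sum>j. dd j *\<^sub>R b j)"
  have ipD: "inner D (b j) = dd j" for j unfolding D_def by (rule on_inner[OF ON sdd])
  have Ddom: "D \<in> dom_L b bt" using sbd by (simp add: dom_L_def ipD)
  have opD: "op_L b bt D = (\<Sum>j. (bt j * dd j) *\<^sub>R b j)" by (simp add: op_L_def ipD)
  have AD: "norm (A D) \<le> K * (norm (op_L b bt D) + norm D)" using Kp Ddom by blast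
  have nvM: "norm v \<le> max M 0 * norm (A \<xi>) ^ k"
  proof -
    have "norm v \<le> M * (\<Prod>l<k. norm (A \<xi>))" using Mp xiH unfolding v_def by auto
    also have "\<dots> \<le> max M 0 * (\<Prod>l<k. norm (A \<xi>))" by (intro mult_right_mono) auto
    finally show ?thesis by simp
  qed
  have "norm (A D) \<le> max K 0 * (norm (op_L b bt D) + norm D)"
    using AD by (meson max.cobounded1 mult_right_mono norm_ge_zero add_nonneg_nonneg order_trans)
  also have "\<dots> \<le> max K 0 * ((L1 + L2) * norm v)"
  proof (intro mult_left_mono)
    have nD': "norm D \<le> L2 * norm v" using nD unfolding D_def .
    show "norm (op_L b bt D) + norm D \<le> (L1 + L2) * norm v"
      using nD' nLD unfolding opD by (simp add: algebra_simps)
  qed simp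
  also have "\<dots> \<le> max K 0 * ((L1 + L2) * (max M 0 * norm (A \<xi>) ^ k))"
    using nvM L1p L2p by (intro mult_left_mono) auto
  also have "\<dots> = (max K 0 * (real k / (real k * a - bb) + real k / ((real k * a - bb) * (- bb))) * max M 0)
              * \<bar>bt 0\<bar> * norm (A \<xi>) ^ k"
    unfolding L1_def L2_def \<delta>_def[symmetric] \<gamma>_def[symmetric] bs_def[symmetric]
    by (simp add: field_simps)
  finally have fin: "norm (A D) \<le> \<dots>" .
  have DH: "D \<in> H" using Ddom domsub by blast
  have e1: "h - inv_neg_Ls b bt m (proj_s b m (Fk (\<lambda>_. \<xi>))) = D" using Deq unfolding v_def D_def .
  show ?thesis
    by (rule exI[of _ h]) (use hint DH fin in \<open>simp only: e1\<close>)
qed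


theorem lemma8p3:
  fixes e :: "real \<Rightarrow> nat \<Rightarrow> 'a::{real_inner,complete_space}"
    and \<beta> :: "real \<Rightarrow> nat \<Rightarrow> real"
    and m k :: nat and lamc :: real and \<Lambda> :: "real set"
    and A\<alpha> :: "'a \<Rightarrow> 'a" and H\<alpha> :: "'a set"
    and Fk :: "(nat \<Rightarrow> 'a) \<Rightarrow> 'a"
  assumes basis: "\<And>lam. hilbert_basis (e lam)"
    and ordered: "\<And>lam i j. i \<le> j \<Longrightarrow> \<beta> lam j \<le> \<beta> lam i"
    and compact_res: "\<And>lam. filterlim (\<beta> lam) at_bot sequentially"
    and beta_cont: "\<And>j. continuous_on UNIV (\<lambda>lam. \<beta> lam j)"
    and m_pos: "1 \<le> m" and k_ge: "2 \<le> k"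
    and Lambda_open: "open \<Lambda>" and lc_in: "lamc \<in> \<Lambda>"
    and exch: "\<And>lam j. lam \<in> \<Lambda> \<Longrightarrow> j < m \<Longrightarrow>
        (lam < lamc \<longrightarrow> \<beta> lam j < 0) \<and> (lam = lamc \<longrightarrow> \<beta> lam j = 0) \<and> (lam > lamc \<longrightarrow> \<beta> lam j > 0)"
    and exch_s: "\<And>j. m \<le> j \<Longrightarrow> \<beta> lamc j < 0"
    and gap: "\<exists>a b. 0 > 2 * real k * a \<and> 2 * real k * a > b \<and>
        (\<forall>lam\<in>\<Lambda>. \<forall>j<m. a \<le> \<beta> lam j) \<and> (\<forall>lam\<in>\<Lambda>. \<forall>j. m \<le> j \<longrightarrow> \<beta> lam j \<le> b)"
    and equal_crit: "\<And>lam j. lam \<in> \<Lambda> \<Longrightarrow> j < m \<Longrightarrow> \<beta> lam j = \<beta> lam 0"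
    and H\<alpha>_sub: "subspace H\<alpha>"
    and A\<alpha>_lin: "\<And>u v a c. u \<in> H\<alpha> \<Longrightarrow> v \<in> H\<alpha> \<Longrightarrow> A\<alpha> (a *\<^sub>R u + c *\<^sub>R v) = a *\<^sub>R A\<alpha> u + c *\<^sub>R A\<alpha> v"
    and A\<alpha>_inj: "\<And>u. u \<in> H\<alpha> \<Longrightarrow> A\<alpha> u = 0 \<Longrightarrow> u = 0"
    and domL_sub: "\<And>lam. lam \<in> \<Lambda> \<Longrightarrow> dom_L (e lam) (\<beta> lam) \<subseteq> H\<alpha>"
    and domL_emb: "\<exists>K. \<forall>\<^sub>F lam in nhds lamc. \<forall>u \<in> dom_L (e lam) (\<beta> lam).
        norm (A\<alpha> u) \<le> K * (norm (op_L (e lam) (\<beta> lam) u) + norm u)"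
    and Fk_bdd: "bounded_klinear_on k H\<alpha> (\<lambda>u. norm (A\<alpha> u)) Fk"
  shows "\<exists>C. \<forall>\<^sub>F lam in nhds lamc. \<forall>\<xi> \<in> center_space (e lam) m.
     \<exists>h. ((\<lambda>s. exp_Ls (e lam) (\<beta> lam) m (- s)
              (proj_s (e lam) m (Fk (\<lambda>_. exp_Lc (e lam) (\<beta> lam) m s \<xi>)))) has_integral h) {..0}
       \<and> h - inv_neg_Ls (e lam) (\<beta> lam) m (proj_s (e lam) m (Fk (\<lambda>_. \<xi>))) \<in> H\<alpha>
       \<and> norm (A\<alpha> (h - inv_neg_Ls (e lam) (\<beta> lam) m (proj_s (e lam) m (Fk (\<lambda>_. \<xi>)))))
           \<le> C * \<bar>\<beta> lam 0\<bar> * norm (A\<alpha> \<xi>) ^ k"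
  proof -
  obtain a bb where ab1: "0 > 2 * real k * a" and ab2: "2 * real k * a > bb"
    and alo: "\<forall>lam\<in>\<Lambda>. \<forall>j<m. a \<le> \<beta> lam j" and bhi: "\<forall>lam\<in>\<Lambda>. \<forall>j. m \<le> j \<longrightarrow> \<beta> lam j \<le> bb"
    using gap by blast
  obtain K where K: "\<forall>\<^sub>F lam in nhds lamc. \<forall>u \<in> dom_L (e lam) (\<beta> lam).
        norm (A\<alpha> u) \<le> K * (norm (op_L (e lam) (\<beta> lam) u) + norm u)"
    using domL_emb by blast
  obtain M where M: "\<forall>us. (\<forall>l<k. us l \<in> H\<alpha>) \<longrightarrow> norm (Fk us) \<le> M * (\<Prod>l<k. norm (A\<alpha> (us l)))"
    using Fk_bdd unfolding bounded_klinear_on_def by blast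
  have ev: "\<forall>\<^sub>F lam in nhds lamc. lam \<in> \<Lambda> \<and> (\<forall>u \<in> dom_L (e lam) (\<beta> lam).
        norm (A\<alpha> u) \<le> K * (norm (op_L (e lam) (\<beta> lam) u) + norm u))"
    using eventually_conj[OF eventually_nhds_in_open[OF Lambda_open lc_in] K] .
  show ?thesis
  proof (rule exI, rule eventually_mono[OF ev], intro ballI)
    fix lam \<xi> assume lam: "lam \<in> \<Lambda> \<and> (\<forall>u \<in> dom_L (e lam) (\<beta> lam).
        norm (A\<alpha> u) \<le> K * (norm (op_L (e lam) (\<beta> lam) u) + norm u))"
      and xi: "\<xi> \<in> center_space (e lam) m"
    have a0: "a \<le> \<beta> lam 0" using alo lam m_pos by auto
    show "\<exists>h. ((\<lambda>s. exp_Ls (e lam) (\<beta> lam) m (- s)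
              (proj_s (e lam) m (Fk (\<lambda>_. exp_Lc (e lam) (\<beta> lam) m s \<xi>)))) has_integral h) {..0}
       \<and> h - inv_neg_Ls (e lam) (\<beta> lam) m (proj_s (e lam) m (Fk (\<lambda>_. \<xi>))) \<in> H\<alpha>
       \<and> norm (A\<alpha> (h - inv_neg_Ls (e lam) (\<beta> lam) m (proj_s (e lam) m (Fk (\<lambda>_. \<xi>)))))
           \<le> (max K 0 * (real k / (real k * a - bb) + real k / ((real k * a - bb) * (- bb))) * max M 0)
              * \<bar>\<beta> lam 0\<bar> * norm (A\<alpha> \<xi>) ^ k"
    proof -
      have crit: "\<And>j. j < m \<Longrightarrow> \<beta> lam j = \<beta> lam 0" using equal_crit lam by blast
      have bh: "\<And>j. m \<le> j \<Longrightarrow> \<beta> lam j \<le> bb" using bhi lam by blast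
      have ds: "dom_L (e lam) (\<beta> lam) \<subseteq> H\<alpha>" using domL_sub lam by blast
      have Kp: "\<forall>u \<in> dom_L (e lam) (\<beta> lam). norm (A\<alpha> u) \<le> K * (norm (op_L (e lam) (\<beta> lam) u) + norm u)"
        using lam by blast
      show ?thesis
        by (rule fixed[OF basis[of lam] m_pos k_ge crit a0 bh ab1 ab2 H\<alpha>_sub ds Kp Fk_bdd M xi])
    qed
  qed
qed

end
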